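(* Let $\phi$ be the characteristic function of the limiting Quicksort random variable $Y$, and for $p\ge0$ let $c_p:=\sup_{t\in\mathbb{R}}|t|^p|\phi(t)|\in[0,\infty]$. Then for every $p>1$, $$c_{p+1}\le 2^{p+1}c_p^{1+1/p}\,\frac{p}{p-1}.$$
   Context: Let $g(u):=2u\ln u+2(1-u)\ln(1-u)+1$ for $u\in(0,1)$. The limiting Quicksort random variable $Y$ is the limit in distribution of $(X_n-\mathbf{E}X_n)/n$, where $X_n$ is the number of comparisons used by randomized Quicksort on $n$ distinct numbers; equivalently, its law is the unique law with $\mathbf{E}Y=0$ and finite variance satisfying $Y\overset{d}{=}UY+(1-U)Z+g(U)$, where on the right $U,Y,Z$ are independent, $Z\overset{d}{=}Y$ and $U$ is uniform on $(0,1)$. *)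

theory Defs
  imports "HOL-Probability.Probability"
begin

definition qs_g :: "real \<Rightarrow> real" where
  "qs_g u = 2 * u * ln u + 2 * (1 - u) * ln (1 - u) + 1"

text \<open>The law of the limiting Quicksort random variable Y: the unique Borel probability
  law on the reals with mean zero and finite variance satisfying
  Y =d U Y + (1 - U) Z + g(U), with U, Y, Z independent, Z =d Y, U uniform on (0,1).\<close>
definition quicksort_law :: "real measure \<Rightarrow> bool" where
  "quicksort_law M \<longleftrightarrow>
     real_distribution M \<and>
     integrable M (\<lambda>y. y ^ 2) \<and>
     (\<integral>y. y \<partial>M) = 0 \<and>
     distr (M \<Otimes>\<^sub>M (M \<Otimes>\<^sub>M uniform_measure lborel {0<..<1::real})) borel
        (\<lambda>(y, z, u). u * y + (1 - u) * z + qs_g u) = M"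

definition qs_c :: "real measure \<Rightarrow> real \<Rightarrow> ennreal" where
  "qs_c M p = (SUP t. ennreal (\<bar>t\<bar> powr p * cmod (char M t)))"

end

theory Submission imports Defs begin

abbreviation "UU \<equiv> uniform_measure lborel {0<..<1::real}"

lemma qs_g_meas[measurable]: "qs_g \<in> borel_measurable borel"
  unfolding qs_g_def by measurable

lemma probU: "prob_space UU"
  by (rule prob_space_uniform_measure) (auto simp: emeasure_lborel_Ioo)

lemma U_integral:
  fixes f :: "real \<Rightarrow> real"
  assumes f: "continuous_on UNIV f"
  shows "(\<integral>u. f u \<partial>uniform_measure lborel {0<..<1::real}) = integral {0..1} f"
proof -
  have fm: "f \<in> borel_measurable borel" using borel_measurable_continuous_onI[OF f] by simp
  have eq: "uniform_measure lborel {0<..<1::real} = density lborel (\<lambda>x. ennreal (indicator {0<..<1::real} x))"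
    unfolding uniform_measure_def by (simp add: emeasure_lborel_Ioo ennreal_indicator divide_ennreal_def)
  have si: "set_integrable lborel {0<..<1::real} f"
    by (rule set_integrable_subset[OF borel_integrable_atLeastAtMost'[OF continuous_on_subset[OF f], of 0 1]]) auto
  have "(\<integral>u. f u \<partial>uniform_measure lborel {0<..<1::real}) = (LINT x : {0<..<1} | lborel. f x)"
    unfolding eq set_lebesgue_integral_def
    by (subst integral_density) (auto simp: fm)
  also have "\<dots> = integral {0<..<1} f"
    by (rule set_borel_integral_eq_integral(2)[OF si])
  finally show ?thesis by (simp add: integral_open_interval_real)
qed

lemma char_eq:
  assumes law: "quicksort_law M"
  shows "char M t = (\<integral>u. iexp (t * qs_g u) * char M (u*t) * char M ((1-u)*t) \<partial>UU)"
proof -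
  interpret real_distribution M using law unfolding quicksort_law_def by auto
  interpret U: prob_space UU by (rule probU)
  interpret MU: pair_prob_space M UU by unfold_locales
  interpret MMU: pair_prob_space M "M \<Otimes>\<^sub>M UU" by unfold_locales
  have d: "distr (M \<Otimes>\<^sub>M (M \<Otimes>\<^sub>M UU)) borel
        (\<lambda>(y, z, u). u * y + (1 - u) * z + qs_g u) = M" using law unfolding quicksort_law_def by auto
  define F where "F = (\<lambda>y z u. iexp (t * (u * y + (1 - u) * z + qs_g u)))"
  have Fm[measurable]: "(\<lambda>(y, z, u). F y z u) \<in> borel_measurable (M \<Otimes>\<^sub>M (M \<Otimes>\<^sub>M UU))"
    unfolding F_def by measurable
  have Fm2[measurable]: "(\<lambda>x. F (fst x) (fst (snd x)) (snd (snd x))) \<in> borel_measurable (M \<Otimes>\<^sub>M (M \<Otimes>\<^sub>M UU))"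
    unfolding F_def by measurable
  have Fb: "norm (F y z u) \<le> 1" for y z u
    unfolding F_def by (simp del: of_real_mult add: norm_exp_i_times)
  have "char M t = char (distr (M \<Otimes>\<^sub>M (M \<Otimes>\<^sub>M UU)) borel
        (\<lambda>(y, z, u). u * y + (1 - u) * z + qs_g u)) t" by (simp only: d)
  also have "\<dots> = (\<integral>x. iexp (t * x) \<partial>distr (M \<Otimes>\<^sub>M (M \<Otimes>\<^sub>M UU)) borel
        (\<lambda>(y, z, u). u * y + (1 - u) * z + qs_g u))" unfolding char_def ..
  also have "\<dots> = (\<integral>w. (\<lambda>(y, z, u). F y z u) w \<partial>(M \<Otimes>\<^sub>M (M \<Otimes>\<^sub>M UU)))"
    by (subst integral_distr) (auto simp: F_def split_beta')
  also have "\<dots> = (\<integral>y. \<integral>w. F y (fst w) (snd w) \<partial>(M \<Otimes>\<^sub>M UU) \<partial>M)"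
  proof -
    have "integrable (M \<Otimes>\<^sub>M (M \<Otimes>\<^sub>M UU)) (\<lambda>(y, w). F y (fst w) (snd w))"
      by (rule MMU.P.integrable_const_bound[where B=1]) (auto simp: Fb split_beta')
    from MMU.integral_fst[OF this] show ?thesis by (simp add: split_beta')
  qed
  also have "\<dots> = (\<integral>w. \<integral>y. F y (fst w) (snd w) \<partial>M \<partial>(M \<Otimes>\<^sub>M UU))"
  proof -
    have "integrable (M \<Otimes>\<^sub>M (M \<Otimes>\<^sub>M UU)) (\<lambda>(y, w). F y (fst w) (snd w))"
      by (rule MMU.P.integrable_const_bound[where B=1]) (auto simp: Fb split_beta')
    from MMU.Fubini_integral[OF this] show ?thesis by simp
  qed
  also have "\<dots> = (\<integral>w. iexp (t * ((1 - snd w) * fst w + qs_g (snd w))) * char M (snd w * t) \<partial>(M \<Otimes>\<^sub>M UU))"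
  proof (rule Bochner_Integration.integral_cong[OF refl])
    fix w :: "real \<times> real"
    have "(\<integral>y. F y (fst w) (snd w) \<partial>M) = (\<integral>y. iexp (t * ((1 - snd w) * fst w + qs_g (snd w))) * iexp ((snd w * t) * y) \<partial>M)"
      unfolding F_def by (rule Bochner_Integration.integral_cong) (auto simp: algebra_simps simp flip: exp_add)
    also have "\<dots> = iexp (t * ((1 - snd w) * fst w + qs_g (snd w))) * char M (snd w * t)"
      unfolding char_def by simp
    finally show "(\<integral>y. F y (fst w) (snd w) \<partial>M) = iexp (t * ((1 - snd w) * fst w + qs_g (snd w))) * char M (snd w * t)" .
  qed
  also have "\<dots> = (\<integral>z. \<integral>u. iexp (t * ((1 - u) * z + qs_g u)) * char M (u * t) \<partial>UU \<partial>M)"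
  proof -
    have "integrable (M \<Otimes>\<^sub>M UU) (\<lambda>(z, u). iexp (t * ((1 - u) * z + qs_g u)) * char M (u * t))"
      by (rule MU.P.integrable_const_bound[where B=1])
        (auto simp del: of_real_mult simp: norm_mult norm_exp_i_times cmod_char_le_1 mult_le_one)
    from MU.integral_fst[OF this] show ?thesis by (simp add: split_beta')
  qed
  also have "\<dots> = (\<integral>u. \<integral>z. iexp (t * ((1 - u) * z + qs_g u)) * char M (u * t) \<partial>M \<partial>UU)"
  proof -
    have "integrable (M \<Otimes>\<^sub>M UU) (\<lambda>(z, u). iexp (t * ((1 - u) * z + qs_g u)) * char M (u * t))"
      by (rule MU.P.integrable_const_bound[where B=1])
        (auto simp del: of_real_mult simp: norm_mult norm_exp_i_times cmod_char_le_1 mult_le_one)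
    from MU.Fubini_integral[OF this] show ?thesis by simp
  qed
  also have "\<dots> = (\<integral>u. iexp (t * qs_g u) * char M (u*t) * char M ((1-u)*t) \<partial>UU)"
  proof (rule Bochner_Integration.integral_cong[OF refl])
    fix u :: real
    have "(\<integral>z. iexp (t * ((1 - u) * z + qs_g u)) * char M (u * t) \<partial>M) = (\<integral>z. (iexp (t * qs_g u) * char M (u * t)) * iexp (((1 - u) * t) * z) \<partial>M)"
      by (rule Bochner_Integration.integral_cong) (auto simp: algebra_simps simp flip: exp_add)
    also have "\<dots> = iexp (t * qs_g u) * char M (u*t) * char M ((1-u)*t)"
      unfolding char_def by simp
    finally show "(\<integral>z. iexp (t * ((1 - u) * z + qs_g u)) * char M (u * t) \<partial>M) = iexp (t * qs_g u) * char M (u*t) * char M ((1-u)*t)" .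
  qed
  finally show ?thesis .
qed

lemma analytic:
  fixes f :: "real \<Rightarrow> real" and p c t :: real
  assumes cont: "continuous_on UNIV f" and nn: "\<And>v. 0 \<le> f v" and le1: "\<And>v. f v \<le> 1"
    and dec: "\<And>v. \<bar>v\<bar> powr p * f v \<le> c" and p: "p > 1" and c: "c > 0" and t: "t \<noteq> 0"
  shows "\<bar>t\<bar> powr (p+1) * integral {0..1} (\<lambda>u. f (u*t) * f ((1-u)*t))
           \<le> 2 powr (p+1) * c powr (1+1/p) * (p/(p-1))"
proof -
  define T where "T = \<bar>t\<bar>"
  have T: "T > 0" using t by (simp add: T_def)
  define a where "a = c powr (1/p)"
  have a: "a > 0" using c by (simp add: a_def)
  have ap: "a powr p = c" using c p by (simp add: a_def powr_powr)
  define s where "s = min (a/T) (1/2)"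
  have s: "0 < s" "s \<le> 1/2" "s \<le> a/T" using a T unfolding s_def by (auto simp: min_def)
  define D where "D = c * (T/2) powr (-p)"
  define K where "K = D * c * T powr (-p)"
  have D0: "D \<ge> 0" "K \<ge> 0" using c by (auto simp: D_def K_def)
  have fbound: "f v \<le> c * \<bar>v\<bar> powr (-p)" if "v \<noteq> 0" for v
  proof -
    have pos: "\<bar>v\<bar> powr p > 0" using that by simp
    have "f v = (\<bar>v\<bar> powr p * f v) / \<bar>v\<bar> powr p" using pos by (simp add: mult.commute)
    also have "\<dots> \<le> c / \<bar>v\<bar> powr p" using dec[of v] pos by (intro divide_right_mono) auto
    finally show ?thesis by (simp add: powr_minus divide_inverse)
  qed
  have fbound2: "f v \<le> D" if "\<bar>v\<bar> \<ge> T/2" for v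
  proof -
    have "v \<noteq> 0" using that T by auto
    have "f v \<le> c * \<bar>v\<bar> powr (-p)" by (rule fbound) fact
    also have "\<dots> \<le> c * (T/2) powr (-p)" using that T p c by (intro mult_left_mono powr_mono2') auto
    finally show ?thesis by (simp add: D_def)
  qed
  have fbound3: "f (u*t) \<le> c * T powr (-p) * u powr (-p)" if "u > 0" for u
  proof -
    have "f (u*t) \<le> c * \<bar>u*t\<bar> powr (-p)" using that t by (intro fbound) auto
    also have "\<bar>u*t\<bar> = u * T" using that by (simp add: T_def abs_mult)
    finally show ?thesis using that T by (simp add: powr_mult mult_ac)
  qed
  define h where "h u = f (u*t) * f ((1-u)*t)" for u
  have hc: "continuous_on UNIV h"
    unfolding h_def
    by (intro continuous_intros continuous_on_compose2[OF cont]) auto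
  have hint: "h integrable_on {x..y}" for x y
    by (rule integrable_continuous_real) (rule continuous_on_subset[OF hc], auto)
  have b1: "h u \<le> D" if "0 \<le> u" "u \<le> 1/2" for u
  proof -
    have "\<bar>(1-u)*t\<bar> \<ge> T/2" using that T by (simp add: T_def abs_mult)
    then have "f ((1-u)*t) \<le> D" by (rule fbound2)
    then have "f (u*t) * f ((1-u)*t) \<le> 1 * D" using le1[of "u*t"] nn D0 by (intro mult_mono) auto
    then show ?thesis unfolding h_def by simp
  qed
  have b4: "h u \<le> D" if "1/2 \<le> u" "u \<le> 1" for u
  proof -
    have "\<bar>u*t\<bar> \<ge> T/2" using that T by (simp add: T_def abs_mult)
    then have "f (u*t) \<le> D" by (rule fbound2)
    then have "f (u*t) * f ((1-u)*t) \<le> D * 1" using le1[of "(1-u)*t"] nn D0 by (intro mult_mono) auto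
    then show ?thesis unfolding h_def by simp
  qed
  have b2: "h u \<le> K * u powr (-p)" if "s \<le> u" "u \<le> 1/2" for u
  proof -
    have "\<bar>(1-u)*t\<bar> \<ge> T/2" using that T s by (simp add: T_def abs_mult)
    then have "f ((1-u)*t) \<le> D" by (rule fbound2)
    moreover have "f (u*t) \<le> c * T powr (-p) * u powr (-p)" using that s by (intro fbound3) auto
    ultimately have "h u \<le> (c * T powr (-p) * u powr (-p)) * D" unfolding h_def
      using nn c D0 by (intro mult_mono) auto
    then show ?thesis by (simp add: K_def algebra_simps)
  qed
  have b3: "h u \<le> K * (1-u) powr (-p)" if "1/2 \<le> u" "u \<le> 1-s" for u
  proof -
    have "\<bar>u*t\<bar> \<ge> T/2" using that T by (simp add: T_def abs_mult)
    then have "f (u*t) \<le> D" by (rule fbound2)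
    moreover have "f ((1-u)*t) \<le> c * T powr (-p) * (1-u) powr (-p)" using that s by (intro fbound3) auto
    ultimately have "h u \<le> D * (c * T powr (-p) * (1-u) powr (-p))" unfolding h_def
      using nn c D0 by (intro mult_mono) auto
    then show ?thesis by (simp add: K_def algebra_simps)
  qed
  define J where "J = K * s powr (1-p) / (p-1) - K * (1/2) powr (1-p) / (p-1)"
  have i1: "((\<lambda>u. D) has_integral (D * s)) {0..s}" using has_integral_const_real[of D 0 s] s by (simp add: mult.commute)
  have i4: "((\<lambda>u. D) has_integral (D * s)) {1-s..1}" using has_integral_const_real[of D "1-s" 1] s by (simp add: mult.commute)
  have i2: "((\<lambda>u. K * u powr (-p)) has_integral J) {s..1/2}"
  proof -
    have "((\<lambda>u. K * u powr (-p)) has_integral ((\<lambda>u. - K * u powr (1-p) / (p-1)) (1/2) - (\<lambda>u. - K * u powr (1-p) / (p-1)) s)) {s..1/2}"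
    proof (rule fundamental_theorem_of_calculus)
      fix x assume x: "x \<in> {s..1/2}"
      then have x0: "x > 0" using s by auto
      have "((\<lambda>u. - K * u powr (1-p) / (p-1)) has_real_derivative (- K * ((1-p) * x powr (1-p-1)) / (p-1))) (at x)"
        by (rule DERIV_cdivide[OF DERIV_cmult[OF has_real_derivative_powr[OF x0, of "1-p"]]])
      moreover have "- K * ((1-p) * x powr (1-p-1)) / (p-1) = K * x powr (-p)" using p by (simp add: field_simps)
      ultimately show "((\<lambda>u. - K * u powr (1-p) / (p-1)) has_vector_derivative K * x powr (-p)) (at x within {s..1/2})"
        by (simp add: has_real_derivative_iff_has_vector_derivative[symmetric] has_field_derivative_at_within)
    qed (use s in auto)
    then show ?thesis by (simp add: J_def field_simps)
  qed
  have i3: "((\<lambda>u. K * (1-u) powr (-p)) has_integral J) {1/2..1-s}"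
  proof -
    have "((\<lambda>u. K * (1-u) powr (-p)) has_integral ((\<lambda>u. K * (1-u) powr (1-p) / (p-1)) (1-s) - (\<lambda>u. K * (1-u) powr (1-p) / (p-1)) (1/2))) {1/2..1-s}"
    proof (rule fundamental_theorem_of_calculus)
      fix x assume x: "x \<in> {1/2..1-s}"
      then have x0: "1-x > 0" using s by auto
      have "((\<lambda>u. K * (1-u) powr (1-p) / (p-1)) has_real_derivative (K * ((1-p) * (1-x) powr (1-p-1) * (0-1)) / (p-1))) (at x)"
        by (rule DERIV_cdivide[OF DERIV_cmult[OF DERIV_chain2[OF has_real_derivative_powr[OF x0, of "1-p"] DERIV_diff[OF DERIV_const DERIV_ident]]]])
      moreover have "K * ((1-p) * (1-x) powr (1-p-1) * (0-1)) / (p-1) = K * (1-x) powr (-p)" using p by (simp add: field_simps)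
      ultimately show "((\<lambda>u. K * (1-u) powr (1-p) / (p-1)) has_vector_derivative K * (1-x) powr (-p)) (at x within {1/2..1-s})"
        by (simp add: has_real_derivative_iff_has_vector_derivative[symmetric] has_field_derivative_at_within)
    qed (use s in auto)
    then show ?thesis by (simp add: J_def field_simps)
  qed
  have hI: "(h has_integral integral {x..y} h) {x..y}" for x y using hint by blast
  have "integral {0..1} h = integral {0..s} h + integral {s..1/2} h + integral {1/2..1-s} h + integral {1-s..1} h"
    using Henstock_Kurzweil_Integration.integral_combine[where a=0 and c=s and b="1/2", OF _ _ hint] Henstock_Kurzweil_Integration.integral_combine[where a="1/2" and c="1-s" and b=1, OF _ _ hint]
      Henstock_Kurzweil_Integration.integral_combine[where a=0 and c="1/2" and b=1, OF _ _ hint] s by auto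
  also have "\<dots> \<le> D * s + J + J + D * s"
    using s
    by (intro add_mono has_integral_le[OF hI i1] has_integral_le[OF hI i2]
        has_integral_le[OF hI i3] has_integral_le[OF hI i4] b1 b2 b3 b4) auto
  finally have Ib: "integral {0..1} h \<le> 2 * (D * s + J)" by simp
  define X where "X = T * (c * T powr (-p) * s powr (1-p))"
  define Y where "Y = T * (c * T powr (-p) * (1/2) powr (1-p))"
  have Y0: "Y \<ge> 0" using T c by (simp add: Y_def)
  have p1: "p - 1 > 0" using p by simp
  have E: "T * (s + c * T powr (-p) * (s powr (1-p) - (1/2) powr (1-p)) / (p-1)) = T * s + (X - Y) / (p-1)"
    using p1 by (simp add: X_def Y_def field_simps)
  have key: "T * (s + c * T powr (-p) * (s powr (1-p) - (1/2) powr (1-p)) / (p-1)) \<le> a * p / (p-1)"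
  proof (cases "a/T \<le> 1/2")
    case True
    then have ss: "s = a/T" by (simp add: s_def)
    have Ts: "T * s = a" using T by (simp add: ss)
    have "X = c * (T * T powr (-p)) * ((a/T) powr (1-p))" by (simp add: X_def ss mult_ac)
    also have "T * T powr (-p) = T powr (1-p)" using T by (simp add: powr_diff powr_minus divide_inverse)
    also have "(a/T) powr (1-p) = a powr (1-p) / T powr (1-p)" using a T by (simp add: powr_divide)
    also have "c * T powr (1-p) * (a powr (1-p) / T powr (1-p)) = a powr p * a powr (1-p)" using T by (simp add: ap)
    also have "\<dots> = a" using a by (simp add: powr_add[symmetric])
    finally have Xa: "X = a" .
    have "T * s + (X - Y) / (p-1) \<le> a + a / (p-1)" using Ts Xa Y0 p1 by (simp add: divide_right_mono)
    also have "\<dots> = a * p / (p-1)" using p1 by (simp add: field_simps)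
    finally show ?thesis using E by simp
  next
    case False
    then have ss: "s = 1/2" by (simp add: s_def)
    have XY: "X = Y" by (simp add: X_def Y_def ss)
    have "T/2 \<le> a" using False T by (simp add: field_simps)
    moreover have "a \<le> a * p / (p-1)" using a p1 by (simp add: field_simps)
    moreover have "T * s + (X - Y) / (p-1) = T/2" using XY ss by simp
    ultimately show ?thesis using E by linarith
  qed
  have DJ: "D * s + J = D * (s + c * T powr (-p) * (s powr (1-p) - (1/2) powr (1-p)) / (p-1))"
  proof -
    have gen: "D * s + (D * c * Tp * x / q - D * c * Tp * y / q) = D * (s + c * Tp * (x - y) / q)" for Tp x y q :: real
      by (simp add: algebra_simps diff_divide_distrib)
    show ?thesis unfolding J_def K_def by (rule gen)
  qed
  have TD: "T powr (p+1) * D = 2 powr p * c * T"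
    using T by (simp add: D_def powr_add powr_minus powr_divide field_simps)
  have cp: "c powr (1+1/p) = c * a" using c by (simp add: a_def powr_add)
  have "\<bar>t\<bar> powr (p+1) * integral {0..1} (\<lambda>u. f (u*t) * f ((1-u)*t)) = T powr (p+1) * integral {0..1} h"
    unfolding h_def T_def by simp
  also have "\<dots> \<le> T powr (p+1) * (2 * (D * s + J))" using Ib T by (intro mult_left_mono) auto
  also have "\<dots> = 2 * 2 powr p * c * (T * (s + c * T powr (-p) * (s powr (1-p) - (1/2) powr (1-p)) / (p-1)))"
  proof -
    have gen: "T powr (p+1) * (2 * (D * Z)) = 2 * 2 powr p * c * (T * Z)" for Z
    proof -
      have "T powr (p+1) * (2 * (D * Z)) = 2 * (T powr (p+1) * D) * Z" by (simp add: mult_ac)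
      also have "\<dots> = 2 * 2 powr p * c * (T * Z)" using TD by (simp add: mult_ac)
      finally show ?thesis .
    qed
    show ?thesis unfolding DJ by (rule gen)
  qed
  also have "\<dots> \<le> 2 * 2 powr p * c * (a * p / (p-1))" using key c by (intro mult_left_mono) auto
  also have "\<dots> = 2 powr (p+1) * c powr (1+1/p) * (p/(p-1))" 
  proof -
    have two: "2 powr (p+1) = 2 * 2 powr (p::real)" by (simp add: powr_add)
    have "2 * 2 powr p * c * (a * p / (p-1)) = 2 * 2 powr p * (c * a) * (p/(p-1))" by simp
    then show ?thesis by (simp only: cp two)
  qed
  finally show ?thesis .
qed

lemma char_norm_bound:
  assumes law: "quicksort_law M"
  shows "cmod (char M t) \<le> integral {0..1} (\<lambda>u. cmod (char M (u*t)) * cmod (char M ((1-u)*t)))"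
proof -
  interpret real_distribution M using law unfolding quicksort_law_def by auto
  have cc: "continuous_on UNIV (char M)" by (intro continuous_at_imp_continuous_on ballI isCont_char)
  have hc: "continuous_on UNIV (\<lambda>u. cmod (char M (u*t)) * cmod (char M ((1-u)*t)))"
  proof -
    have c1: "continuous_on UNIV (\<lambda>u. char M (u*t))"
      by (rule continuous_on_compose2[OF cc _ subset_UNIV]) (intro continuous_intros)
    have c2: "continuous_on UNIV (\<lambda>u. char M ((1-u)*t))"
      by (rule continuous_on_compose2[OF cc _ subset_UNIV]) (intro continuous_intros)
    show ?thesis by (rule continuous_on_mult[OF continuous_on_norm[OF c1] continuous_on_norm[OF c2]])
  qed
  have "cmod (char M t) = norm (\<integral>u. iexp (t * qs_g u) * char M (u*t) * char M ((1-u)*t) \<partial>UU)"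
    by (simp only: char_eq[OF law, of t])
  also have "\<dots> \<le> (\<integral>u. norm (iexp (t * qs_g u) * char M (u*t) * char M ((1-u)*t)) \<partial>UU)"
    by (rule integral_norm_bound)
  also have "\<dots> = (\<integral>u. cmod (char M (u*t)) * cmod (char M ((1-u)*t)) \<partial>UU)"
    by (rule Bochner_Integration.integral_cong) (auto simp del: of_real_mult simp: norm_mult norm_exp_i_times)
  also have "\<dots> = integral {0..1} (\<lambda>u. cmod (char M (u*t)) * cmod (char M ((1-u)*t)))"
    by (rule U_integral[OF hc])
  finally show ?thesis .
qed

theorem lemma2p6:
  fixes M :: "real measure" and p :: real
  assumes "quicksort_law M" and "p > 1"
  shows "qs_c M p = \<infinity> \<or>
         qs_c M (p + 1) \<le> ennreal (2 powr (p + 1) * enn2real (qs_c M p) powr (1 + 1 / p) * (p / (p - 1)))"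
proof (cases "qs_c M p = \<infinity>")
  case True
  then show ?thesis by simp
next
  case False
  interpret real_distribution M using assms(1) unfolding quicksort_law_def by auto
  define c where "c = enn2real (qs_c M p)"
  have c0: "c \<ge> 0" by (simp add: c_def)
  have cq: "qs_c M p = ennreal c" using False by (simp add: c_def less_top)
  have dec: "\<bar>v\<bar> powr p * cmod (char M v) \<le> c" for v
  proof -
    have "ennreal (\<bar>v\<bar> powr p * cmod (char M v)) \<le> qs_c M p"
      unfolding qs_c_def by (rule SUP_upper) simp
    then show ?thesis using c0 by (simp add: cq)
  qed
  define R where "R = 2 powr (p + 1) * c powr (1 + 1 / p) * (p / (p - 1))"
  have R0: "R \<ge> 0" using assms(2) by (simp add: R_def)
  have pt: "\<bar>t\<bar> powr (p+1) * cmod (char M t) \<le> R" for t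
  proof (cases "t = 0")
    case True
    then show ?thesis using R0 by simp
  next
    case t: False
    show ?thesis
    proof (cases "c = 0")
      case True
      have "\<bar>t\<bar> powr p * cmod (char M t) \<le> 0" using dec[of t] True by simp
      moreover have "\<bar>t\<bar> powr p > 0" using t by simp
      ultimately have "cmod (char M t) = 0"
        by (metis mult_le_0_iff norm_ge_zero order_antisym_conv not_le)
      then show ?thesis using R0 by simp
    next
      case False
      with c0 have cpos: "c > 0" by simp
      have cc: "continuous_on UNIV (char M)" by (intro continuous_at_imp_continuous_on ballI isCont_char)
      have "\<bar>t\<bar> powr (p+1) * cmod (char M t) \<le>
            \<bar>t\<bar> powr (p+1) * integral {0..1} (\<lambda>u. cmod (char M (u*t)) * cmod (char M ((1-u)*t)))"
        by (intro mult_left_mono char_norm_bound[OF assms(1)]) auto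
      also have "\<dots> \<le> R" unfolding R_def
        by (rule analytic[where f="\<lambda>v. cmod (char M v)", OF continuous_on_norm[OF cc] norm_ge_zero cmod_char_le_1 dec assms(2) cpos t])
      finally show ?thesis .
    qed
  qed
  have "qs_c M (p + 1) \<le> ennreal R"
    unfolding qs_c_def by (rule SUP_least) (rule ennreal_leI[OF pt])
  then show ?thesis by (simp add: R_def c_def)
qed

end
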